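(* Let $r\ge1$ and $k\ge1$ be integers. For any two states $\vec a,\vec b\in\mathcal H_{r,k}$, the Hanoi game on $\mathcal H_{r,k}$ transforms $\vec a$ into $\vec b$ in at most $2^k-1$ moves. The same holds for the Hanoi game on $\mathcal H^*_{r,k}$: for any $\vec a,\vec b\in\mathcal H^*_{r,k}$, $\vec a$ can be transformed into $\vec b$ in at most $2^k-1$ moves with all intermediate states in $\mathcal H^*_{r,k}$.
   Context: A Hanoi state is a finite sequence of nonnegative integers $\vec x=(x_1,\dots,x_k)$ with $x_i\ne x_{i-1}$ for all $i>1$. $\mathcal H_{r,k}$ is the set of Hanoi states in $\{0,1,\dots,r\}^k$, and $\mathcal H^*_{r,k}\subseteq\mathcal H_{r,k}$ is the set of proper Hanoi states, those with $x_1\ne0$. In the Hanoi game on $\mathcal H_{r,k}$ a state is transformed by moves of two types: (1) an adjustment changes $x_k$ to any other value in $\{0,1,\dots,r\}$ different from $x_{k-1}$ (if $k=1$, to any other value); (2) for $k\ge2$, an involution finds the longest final segment $(x_j,\dots,x_k)$ of $\vec x$ on which the entries alternate between the values $x_k$ and $x_{k-1}$, and swaps the values $x_k$ and $x_{k-1}$ throughout that segment (e.g. $(1,2,3,4)\mapsto(1,2,4,3)$, $(1,2,1,2)\mapsto(2,1,2,1)$). The Hanoi game on $\mathcal H^*_{r,k}$ is the same but all states involved must be proper (moves that would make $x_1=0$ are forbidden). *)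

theory Defs
  imports Main
begin

definition hanoi_states :: "nat \<Rightarrow> nat \<Rightarrow> nat list set" where
  "hanoi_states r k = {xs. length xs = k \<and> (\<forall>x\<in>set xs. x \<le> r) \<and>
      (\<forall>i. 0 < i \<and> i < k \<longrightarrow> xs ! i \<noteq> xs ! (i - 1))}"

definition proper_hanoi_states :: "nat \<Rightarrow> nat \<Rightarrow> nat list set" where
  "proper_hanoi_states r k = {xs \<in> hanoi_states r k. hd xs \<noteq> 0}"

fun swap_alt :: "nat \<Rightarrow> nat \<Rightarrow> nat list \<Rightarrow> nat list" where
  "swap_alt u v [] = []"
| "swap_alt u v (y # ys) = (if y = u then v # swap_alt v u ys else y # ys)"

text \<open>The involution move: longest final segment alternating between x_k and x_{k-1},
  with these two values swapped on it.\<close>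
definition involution :: "nat list \<Rightarrow> nat list" where
  "involution xs = rev (swap_alt (last xs) (last (butlast xs)) (rev xs))"

definition adjustment :: "nat \<Rightarrow> nat list \<Rightarrow> nat list \<Rightarrow> bool" where
  "adjustment r xs ys \<longleftrightarrow> (\<exists>zs c c'. xs = zs @ [c] \<and> ys = zs @ [c'] \<and> c' \<le> r \<and> c' \<noteq> c \<and>
      (zs = [] \<or> c' \<noteq> last zs))"

definition hanoi_move :: "nat \<Rightarrow> nat \<Rightarrow> nat list \<Rightarrow> nat list \<Rightarrow> bool" where
  "hanoi_move r k xs ys \<longleftrightarrow> xs \<in> hanoi_states r k \<and> ys \<in> hanoi_states r k \<and>
     (adjustment r xs ys \<or> (2 \<le> length xs \<and> ys = involution xs))"

definition proper_hanoi_move :: "nat \<Rightarrow> nat \<Rightarrow> nat list \<Rightarrow> nat list \<Rightarrow> bool" where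
  "proper_hanoi_move r k xs ys \<longleftrightarrow> hanoi_move r k xs ys \<and>
     xs \<in> proper_hanoi_states r k \<and> ys \<in> proper_hanoi_states r k"

end

theory Submission
  imports Defs
begin

definition reach :: "('a \<Rightarrow> 'a \<Rightarrow> bool) \<Rightarrow> nat \<Rightarrow> 'a \<Rightarrow> 'a \<Rightarrow> bool" where
  "reach R n a b = (\<exists>m\<le>n. (R ^^ m) a b)"

lemma reach_refl: "reach R n a a"
  unfolding reach_def by (rule exI[of _ 0]) simp

lemma reach_step: "R a b \<Longrightarrow> reach R 1 a b"
  unfolding reach_def using relpowp_1[of R] by (metis order_refl)

lemma reach_trans: "reach R m a b \<Longrightarrow> reach R n b c \<Longrightarrow> reach R (m + n) a c"
  unfolding reach_def
proof -
  assume "\<exists>i\<le>m. (R ^^ i) a b" "\<exists>j\<le>n. (R ^^ j) b c"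
  then obtain i j where "i \<le> m" "(R ^^ i) a b" "j \<le> n" "(R ^^ j) b c" by blast
  then have "(R ^^ (i + j)) a c" by (auto simp: relpowp_add)
  then show "\<exists>l\<le>m + n. (R ^^ l) a c" using \<open>i \<le> m\<close> \<open>j \<le> n\<close> by (intro exI[of _ "i+j"]) auto
qed

lemma reach_mono: "m \<le> n \<Longrightarrow> reach R m a b \<Longrightarrow> reach R n a b"
  unfolding reach_def by (meson order_trans)

lemma hs_snoc: "xs @ [c] \<in> hanoi_states r (Suc k) \<longleftrightarrow>
    xs \<in> hanoi_states r k \<and> c \<le> r \<and> (xs = [] \<or> c \<noteq> last xs)"
proof
  assume A: "xs @ [c] \<in> hanoi_states r (Suc k)"
  then have L: "length xs = k" and B: "\<forall>x\<in>set xs. x \<le> r" "c \<le> r"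
    and N: "\<And>i. 0 < i \<Longrightarrow> i < Suc k \<Longrightarrow> (xs@[c]) ! i \<noteq> (xs@[c]) ! (i - 1)"
    unfolding hanoi_states_def by auto
  have "xs \<in> hanoi_states r k"
    unfolding hanoi_states_def
  proof (intro CollectI conjI allI impI)
    fix i assume "0 < i \<and> i < k"
    then have "i - 1 < length xs" using L by auto
    then show "xs ! i \<noteq> xs ! (i - 1)" using N[of i] L \<open>0 < i \<and> i < k\<close> by (auto simp: nth_append)
  qed (use L B in auto)
  moreover have "xs = [] \<or> c \<noteq> last xs"
  proof (cases "xs = []")
    case False
    then have "k > 0" using L by auto
    then have "(xs@[c]) ! k \<noteq> (xs@[c]) ! (k - 1)" using N[of k] by auto
    then show ?thesis using L False by (auto simp: nth_append last_conv_nth)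
  qed simp
  ultimately show "xs \<in> hanoi_states r k \<and> c \<le> r \<and> (xs = [] \<or> c \<noteq> last xs)"
    using B by auto
next
  assume A: "xs \<in> hanoi_states r k \<and> c \<le> r \<and> (xs = [] \<or> c \<noteq> last xs)"
  then have L: "length xs = k" and B: "\<forall>x\<in>set xs. x \<le> r" "c \<le> r"
    and N: "\<And>i. 0 < i \<Longrightarrow> i < k \<Longrightarrow> xs ! i \<noteq> xs ! (i - 1)"
    and C: "xs = [] \<or> c \<noteq> last xs"
    unfolding hanoi_states_def by auto
  show "xs @ [c] \<in> hanoi_states r (Suc k)"
    unfolding hanoi_states_def
  proof (intro CollectI conjI allI impI)
    fix i assume i: "0 < i \<and> i < Suc k"
    show "(xs@[c]) ! i \<noteq> (xs@[c]) ! (i - 1)"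
    proof (cases "i < k")
      case True then show ?thesis using N[of i] i L by (auto simp: nth_append)
    next
      case False
      then have "i = k" using i by auto
      then show ?thesis using C i L by (auto simp: nth_append last_conv_nth)
    qed
  qed (use L B in auto)
qed

definition valid :: "bool \<Rightarrow> nat \<Rightarrow> nat \<Rightarrow> nat list \<Rightarrow> bool" where
  "valid p r k xs = (xs \<in> hanoi_states r k \<and> (p \<longrightarrow> hd xs \<noteq> 0))"

definition mv :: "bool \<Rightarrow> nat \<Rightarrow> nat \<Rightarrow> nat list \<Rightarrow> nat list \<Rightarrow> bool" where
  "mv p r k xs ys = (hanoi_move r k xs ys \<and> (p \<longrightarrow> hd xs \<noteq> 0 \<and> hd ys \<noteq> 0))"

lemma mv_False: "mv False r k = hanoi_move r k"
  by (auto simp: mv_def fun_eq_iff)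

lemma mv_True: "mv True r k = proper_hanoi_move r k"
  by (auto simp: mv_def fun_eq_iff proper_hanoi_move_def proper_hanoi_states_def hanoi_move_def)

lemma valid_snoc: "xs \<noteq> [] \<Longrightarrow> valid p r (Suc k) (xs @ [c]) \<longleftrightarrow>
    valid p r k xs \<and> c \<le> r \<and> c \<noteq> last xs"
  by (auto simp: valid_def hs_snoc)

lemma inv_adj: "zs = [] \<or> e' \<noteq> last zs \<Longrightarrow> involution (zs @ [e, e']) = zs @ [e', e]"
proof -
  assume h: "zs = [] \<or> e' \<noteq> last zs"
  have "swap_alt e' e (rev zs) = rev zs"
    using h by (cases "rev zs") (auto simp: last_rev[symmetric] hd_rev)
  then show ?thesis by (simp add: involution_def butlast_append)
qed

lemma inv_inv: "involution (zs @ [a, b, a]) = involution (zs @ [a, b]) @ [b]"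
  by (simp add: involution_def butlast_append)

lemma two_split: "2 \<le> length xs \<Longrightarrow> \<exists>zs a b. xs = zs @ [a, b]"
  apply (cases xs rule: rev_cases, simp)
  subgoal for ys y by (cases ys rule: rev_cases) auto
  done

lemma two_step:
  assumes "xs \<noteq> []" "valid p r (Suc k) (xs @ [c])" "valid p r (Suc k) (xs @ [t])"
    "valid p r (Suc k) (involution (xs @ [t]))"
  shows "reach (mv p r (Suc k)) 2 (xs @ [c]) (involution (xs @ [t]))"
proof -
  have "2 \<le> length (xs @ [t])" using assms(1) by (cases xs) auto
  then have i: "mv p r (Suc k) (xs @ [t]) (involution (xs @ [t]))"
    using assms(3,4) unfolding mv_def hanoi_move_def valid_def by blast
  show ?thesis
  proof (cases "c = t")
    case True
    then show ?thesis using reach_mono[OF _ reach_step[of "mv p r (Suc k)", OF i]] by auto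
  next
    case False
    have "adjustment r (xs @ [c]) (xs @ [t])"
      unfolding adjustment_def using False assms by (auto simp: valid_snoc)
    then have "mv p r (Suc k) (xs @ [c]) (xs @ [t])"
      using assms by (auto simp: mv_def hanoi_move_def valid_def)
    from reach_trans[OF reach_step[of "mv p r (Suc k)", OF this] reach_step[of "mv p r (Suc k)", OF i]]
    show ?thesis by (simp only: one_add_one)
  qed
qed

lemma one_step:
  assumes "mv p r k xs ys" "valid p r (Suc k) (xs @ [c])" "1 \<le> k"
  shows "\<exists>c'. valid p r (Suc k) (ys @ [c']) \<and> reach (mv p r (Suc k)) 2 (xs @ [c]) (ys @ [c'])"
proof -
  have hm: "hanoi_move r k xs ys" and pp: "p \<longrightarrow> hd xs \<noteq> 0 \<and> hd ys \<noteq> 0"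
    using assms(1) by (auto simp: mv_def)
  have vx: "valid p r k xs" and vy: "valid p r k ys"
    using hm pp by (auto simp: hanoi_move_def valid_def)
  have lx: "length xs = k" "length ys = k" using hm by (auto simp: hanoi_move_def hanoi_states_def)
  then have ne: "xs \<noteq> []" "ys \<noteq> []" using assms(3) by auto
  from hm consider (A) "adjustment r xs ys" | (B) "2 \<le> length xs" "ys = involution xs"
    unfolding hanoi_move_def by blast
  then show ?thesis
  proof cases
    case A
    then obtain zs e e' where z: "xs = zs @ [e]" "ys = zs @ [e']" "e' \<le> r" "e' \<noteq> e"
      "zs = [] \<or> e' \<noteq> last zs" unfolding adjustment_def by blast
    have inv: "involution (xs @ [e']) = ys @ [e]" using inv_adj[OF z(5), of e] z by simp
    have v1: "valid p r (Suc k) (xs @ [e'])" by (subst valid_snoc[OF ne(1)]) (use vx z in auto)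
    have v2: "valid p r (Suc k) (ys @ [e])"
    proof -
      have "e \<in> set xs" using z by simp
      then have "e \<le> r" using vx unfolding valid_def hanoi_states_def by blast
      moreover have "last ys = e'" using z by simp
      ultimately show ?thesis using vy z(4) by (subst valid_snoc[OF ne(2)]) auto
    qed
    show ?thesis using two_step[OF ne(1) assms(2) v1] inv v2 by (intro exI[of _ e]) auto
  next
    case B
    obtain zs a b where z: "xs = zs @ [a, b]" using two_split[OF B(1)] by blast
    have inv: "involution (xs @ [a]) = ys @ [b]" using B z inv_inv by simp
    have xv: "xs \<in> hanoi_states r k" using vx by (simp add: valid_def)
    have "(zs @ [a]) @ [b] \<in> hanoi_states r (Suc (Suc (length zs)))" using xv z lx by simp
    then have h1: "zs @ [a] \<in> hanoi_states r (Suc (length zs))" "b \<le> r" "b \<noteq> a"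
      unfolding hs_snoc by auto
    from h1(1) have "a \<le> r" unfolding hs_snoc by blast
    then have ab: "a \<noteq> b" "a \<le> r" "b \<le> r" using h1 by auto
    have v1: "valid p r (Suc k) (xs @ [a])" by (subst valid_snoc[OF ne(1)]) (use vx z ab in auto)
    have "last ys = a" using B z by (simp add: involution_def butlast_append)
    then have v2: "valid p r (Suc k) (ys @ [b])" by (subst valid_snoc[OF ne(2)]) (use vy ab in auto)
    show ?thesis using two_step[OF ne(1) assms(2) v1] inv v2 by (intro exI[of _ b]) auto
  qed
qed

lemma adj_step:
  assumes "valid p r (Suc k) (xs @ [c])" "valid p r (Suc k) (xs @ [d])"
  shows "reach (mv p r (Suc k)) 1 (xs @ [c]) (xs @ [d])"
proof (cases "c = d")
  case True then show ?thesis by (simp add: reach_refl)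
next
  case False
  have "xs @ [d] \<in> hanoi_states r (Suc k)" using assms(2) by (simp add: valid_def)
  then have "d \<le> r" "xs = [] \<or> d \<noteq> last xs" unfolding hs_snoc by auto
  then have "adjustment r (xs @ [c]) (xs @ [d])" unfolding adjustment_def using False by blast
  then have "mv p r (Suc k) (xs @ [c]) (xs @ [d])"
    using assms unfolding mv_def hanoi_move_def valid_def by blast
  then show ?thesis by (rule reach_step)
qed

lemma lift:
  assumes "(mv p r k ^^ n) xs ys" "1 \<le> k" "valid p r (Suc k) (xs @ [c])"
  shows "\<exists>c'. valid p r (Suc k) (ys @ [c']) \<and> reach (mv p r (Suc k)) (2 * n) (xs @ [c]) (ys @ [c'])"
  using assms(1)
proof (induction n arbitrary: ys)
  case 0
  then have "xs = ys" by simp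
  then show ?case using assms(3) reach_refl by (intro exI[of _ c]) auto
next
  case (Suc n)
  from Suc.prems obtain y where y: "(mv p r k ^^ n) xs y" "mv p r k y ys"
    by (auto elim: relpowp_Suc_E)
  from Suc.IH[OF y(1)] obtain c'' where c'': "valid p r (Suc k) (y @ [c''])"
    "reach (mv p r (Suc k)) (2 * n) (xs @ [c]) (y @ [c''])" by blast
  from one_step[OF y(2) c''(1) assms(2)] obtain c' where
    c': "valid p r (Suc k) (ys @ [c'])" "reach (mv p r (Suc k)) 2 (y @ [c'']) (ys @ [c'])" by blast
  have "reach (mv p r (Suc k)) (2 * n + 2) (xs @ [c]) (ys @ [c'])"
    by (rule reach_trans[OF c''(2) c'(2)])
  then show ?case using c'(1) by (intro exI[of _ c']) simp
qed

lemma main: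
  assumes "1 \<le> k" "valid p r k a" "valid p r k b"
  shows "reach (mv p r k) (2 ^ k - 1) a b"
  using assms
proof (induction k arbitrary: a b)
  case 0 then show ?case by simp
next
  case (Suc k)
  have la: "length a = Suc k" "length b = Suc k"
    using Suc.prems by (auto simp: valid_def hanoi_states_def)
  obtain xs c where a: "a = xs @ [c]" using la(1) by (cases a rule: rev_cases) auto
  obtain ys d where b: "b = ys @ [d]" using la(2) by (cases b rule: rev_cases) auto
  show ?case
  proof (cases "k = 0")
    case True
    then have "xs = []" "ys = []" using la a b by auto
    then show ?thesis using adj_step[of p r k "[]" c d] Suc.prems a b True by simp
  next
    case False
    then have k1: "1 \<le> k" by simp
    have ne: "xs \<noteq> []" "ys \<noteq> []" using la a b False by auto
    have vx: "valid p r k xs" using Suc.prems(2) a valid_snoc[OF ne(1)] by blast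
    have vy: "valid p r k ys" using Suc.prems(3) b valid_snoc[OF ne(2)] by blast
    from Suc.IH[OF k1 vx vy] obtain n where n: "n \<le> 2 ^ k - 1" "(mv p r k ^^ n) xs ys"
      unfolding reach_def by blast
    from lift[OF n(2) k1, of c] Suc.prems(2) a obtain c' where
      c': "valid p r (Suc k) (ys @ [c'])" "reach (mv p r (Suc k)) (2 * n) a (ys @ [c'])" by blast
    have "reach (mv p r (Suc k)) (2 * n + 1) a b"
      using reach_trans[OF c'(2) adj_step[OF c'(1), of d]] Suc.prems(3) b by simp
    moreover have "2 * n + 1 \<le> 2 ^ Suc k - 1"
    proof -
      have "(1::nat) \<le> 2 ^ k" by simp
      moreover have "\<And>K m::nat. 1 \<le> K \<Longrightarrow> m \<le> K - 1 \<Longrightarrow> 2 * m + 1 \<le> 2 * K - 1" by arith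
      ultimately show ?thesis using n(1) by simp
    qed
    ultimately show ?thesis by (rule reach_mono[rotated])
  qed
qed

theorem lemma5:
  fixes r k :: nat
  assumes "1 \<le> r" and "1 \<le> k"
  shows "(\<forall>a\<in>hanoi_states r k. \<forall>b\<in>hanoi_states r k.
            \<exists>m \<le> 2 ^ k - 1. (hanoi_move r k ^^ m) a b) \<and>
         (\<forall>a\<in>proper_hanoi_states r k. \<forall>b\<in>proper_hanoi_states r k.
            \<exists>m \<le> 2 ^ k - 1. (proper_hanoi_move r k ^^ m) a b)"
proof (intro conjI ballI)
  fix a b assume "a \<in> hanoi_states r k" "b \<in> hanoi_states r k"
  then have "reach (mv False r k) (2 ^ k - 1) a b" using main[OF assms(2)] by (simp add: valid_def)
  then show "\<exists>m \<le> 2 ^ k - 1. (hanoi_move r k ^^ m) a b" by (simp add: reach_def mv_False)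
next
  fix a b assume "a \<in> proper_hanoi_states r k" "b \<in> proper_hanoi_states r k"
  then have "reach (mv True r k) (2 ^ k - 1) a b" using main[OF assms(2)]
    by (simp add: valid_def proper_hanoi_states_def)
  then show "\<exists>m \<le> 2 ^ k - 1. (proper_hanoi_move r k ^^ m) a b" by (simp add: reach_def mv_True)
qed

end
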